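(* Let $n\ge1$, $N=2^n$. For every 4-round affine key-schedule $(\omega,\gamma)$ there exists a distinguisher $D$ making $0$ queries to the round functions and $4$ queries to the related-key oracle such that, for any four functions $f_1,f_2,f_3,f_4:\{0,1\}^n\to\{0,1\}^n$, $$\mathbf{Adv}^{\oplus\text{-rka}}_{\mathsf{KAFw}^{\vec f,(\omega,\gamma)}}(D)\ge 1-\frac{1}{N^2-1},$$ where $\vec f=(f_1,f_2,f_3,f_4)$.
   Context: Identify $\{0,1\}^n$ with $\mathbb{F}_2^n$; $X\|Y$ denotes concatenation. A $t$-round affine key-schedule $(\omega,\gamma)$ is given by $n\times n$ matrices $M^{(w)}_0,\dots,M^{(w)}_3,M_1,\dots,M_t$ over $\mathbb{F}_2$ and constants $C^{(w)}_0,\dots,C^{(w)}_3,C_1,\dots,C_t\in\mathbb{F}_2^n$, with $\omega_i(k)=M^{(w)}_i\cdot k\oplus C^{(w)}_i$ ($i=0,\dots,3$) and $\gamma_j(k)=M_j\cdot k\oplus C_j$ ($j=1,\dots,t$). For $f:\{0,1\}^n\to\{0,1\}^n$ and $\kappa\in\{0,1\}^n$ let $\Psi^f_\kappa(W_L\|W_R)=W_R\|(W_L\oplus f(\kappa\oplus W_R))$. For functions $\vec f=(f_1,\dots,f_t)$ define the $t$-round cipher with key $k$: $\mathsf{KAFw}^{\vec f,(\omega,\gamma)}_k(W)=(\omega_2(k)\|\omega_3(k))\oplus\Psi^{f_t}_{\gamma_t(k)}\circ\cdots\circ\Psi^{f_1}_{\gamma_1(k)}\big((\omega_0(k)\|\omega_1(k))\oplus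 W\big)$. For a blockcipher $E$ ($n$-bit keys, $2n$-bit blocks) and key $k$, $\mathsf{RK}[E_k]$ maps $(\Delta,LR)\mapsto E_{k\oplus\Delta}(LR)$ and its inverse maps $(\Delta,ST)\mapsto E^{-1}_{k\oplus\Delta}(ST)$. For a distinguisher $D$ with two-sided access to the related-key oracle and access to $\vec f$, $\mathbf{Adv}^{\oplus\text{-rka}}_{\mathsf{KAFw}^{\vec f,(\omega,\gamma)}}(D)=\big|\Pr_{\mathsf{IC},k}[D^{\mathsf{RK}[\mathsf{IC}_k],\vec f}=1]-\Pr_k[D^{\mathsf{RK}[\mathsf{KAFw}^{\vec f,(\omega,\gamma)}_k],\vec f}=1]\big|$, where $k$ is uniform in $\{0,1\}^n$ and $\mathsf{IC}$ is a uniformly random blockcipher with $2n$-bit blocks and $n$-bit keys. *)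

theory Defs
  imports "HOL-Probability.Probability" "HOL-Library.Z2"
begin

text \<open>F_2^n is modelled as bit ^ 'n (n = CARD('n)); XOR is +.
  A 2n-bit block W_L || W_R is modelled as the pair (W_L, W_R).\<close>

type_synonym 'n key = "bit ^ 'n"
type_synonym 'n block = "(bit ^ 'n) \<times> (bit ^ 'n)"
type_synonym 'n rf = "bit ^ 'n \<Rightarrow> bit ^ 'n"

definition xorb :: "'n::finite block \<Rightarrow> 'n block \<Rightarrow> 'n block" where
  "xorb X Y = (fst X + fst Y, snd X + snd Y)"

definition Psi :: "'n::finite rf \<Rightarrow> 'n key \<Rightarrow> 'n block \<Rightarrow> 'n block" where
  "Psi f \<kappa> W = (snd W, fst W + f (\<kappa> + snd W))"

definition aff :: "bit ^ 'n ^ 'n \<Rightarrow> bit ^ 'n \<Rightarrow> 'n::finite key \<Rightarrow> bit ^ 'n" where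
  "aff M C k = M *v k + C"

fun rounds :: "'n::finite rf list \<Rightarrow> (nat \<Rightarrow> bit ^ 'n ^ 'n) \<Rightarrow> (nat \<Rightarrow> bit ^ 'n)
    \<Rightarrow> 'n key \<Rightarrow> nat \<Rightarrow> 'n block \<Rightarrow> 'n block" where
  "rounds fs M C k 0 W = W"
| "rounds fs M C k (Suc j) W =
     Psi (fs ! j) (aff (M (Suc j)) (C (Suc j)) k) (rounds fs M C k j W)"

text \<open>KAFw^{f,(omega,gamma)}_k with t = length fs rounds;
  Mw, Cw give omega_0..omega_3, M, C give gamma_1..gamma_t.\<close>
definition KAFw :: "'n::finite rf list \<Rightarrow> (nat \<Rightarrow> bit ^ 'n ^ 'n) \<Rightarrow> (nat \<Rightarrow> bit ^ 'n)
    \<Rightarrow> (nat \<Rightarrow> bit ^ 'n ^ 'n) \<Rightarrow> (nat \<Rightarrow> bit ^ 'n) \<Rightarrow> 'n key \<Rightarrow> 'n block \<Rightarrow> 'n block" where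
  "KAFw fs Mw Cw M C k W =
     xorb (aff (Mw 2) (Cw 2) k, aff (Mw 3) (Cw 3) k)
       (rounds fs M C k (length fs) (xorb (aff (Mw 0) (Cw 0) k, aff (Mw 1) (Cw 1) k) W))"

text \<open>A related-key query: (forward?, Delta, block). Forward queries (True, Delta, LR)
  return E_{k xor Delta}(LR); inverse queries (False, Delta, ST) return E^{-1}_{k xor Delta}(ST).\<close>
type_synonym 'n query = "bool \<times> 'n key \<times> 'n block"

definition RK :: "('n::finite key \<Rightarrow> 'n block \<Rightarrow> 'n block) \<Rightarrow> 'n key \<Rightarrow> 'n query \<Rightarrow> 'n block" where
  "RK E k q = (case q of (fwd, \<Delta>, X) \<Rightarrow>
      if fwd then E (k + \<Delta>) X else inv (E (k + \<Delta>)) X)"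

text \<open>An adaptive distinguisher with no access to the round functions:
  a query strategy (next query as a function of the answers so far) and
  a final decision (output 1 = True) as a function of all answers.\<close>
type_synonym 'n distinguisher = "('n block list \<Rightarrow> 'n query) \<times> ('n block list \<Rightarrow> bool)"

fun answers :: "('n::finite query \<Rightarrow> 'n block) \<Rightarrow> ('n block list \<Rightarrow> 'n query) \<Rightarrow> nat \<Rightarrow> 'n block list" where
  "answers Orc Q 0 = []"
| "answers Orc Q (Suc m) = (let as = answers Orc Q m in as @ [Orc (Q as)])"

definition run :: "nat \<Rightarrow> 'n::finite distinguisher \<Rightarrow> ('n query \<Rightarrow> 'n block) \<Rightarrow> bool" where
  "run q D Orc = snd D (answers Orc (fst D) q)"

definition ideal_ciphers :: "('n::finite key \<Rightarrow> 'n block \<Rightarrow> 'n block) set" where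
  "ideal_ciphers = {E. \<forall>\<kappa>. bij (E \<kappa>)}"

definition adv_rka :: "nat \<Rightarrow> 'n::finite distinguisher \<Rightarrow> ('n key \<Rightarrow> 'n block \<Rightarrow> 'n block) \<Rightarrow> real" where
  "adv_rka q D Enc =
     \<bar>measure_pmf.prob (pmf_of_set (ideal_ciphers \<times> (UNIV :: 'n key set)))
         {(E, k). run q D (RK E k)}
      - measure_pmf.prob (pmf_of_set (UNIV :: 'n key set))
         {k. run q D (RK Enc k)}\<bar>"

end

theory Submission imports Defs begin
lemma bvadd_self[simp]: "(x::bit^'n) + x = 0"
  by (simp add: vec_eq_iff)
lemma bvadd_self2[simp]: "(x::bit^'n) + (x + y) = y"
  by (simp add: add.assoc[symmetric])

lemma bv_sum0: "(a::bit^'n) + b = 0 \<Longrightarrow> b = a"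
  by (metis bvadd_self2 add.right_neutral)

lemma aff_add: "aff A c (k + d) = aff A c k + A *v d"
  by (simp add: aff_def matrix_vector_right_distrib add_ac)

context
  fixes f1 f2 f3 f4 :: "'n::finite rf"
    and Mw :: "nat \<Rightarrow> bit ^ 'n ^ 'n" and Cw :: "nat \<Rightarrow> bit ^ 'n"
    and M :: "nat \<Rightarrow> bit ^ 'n ^ 'n" and C :: "nat \<Rightarrow> bit ^ 'n"
begin

definition "midf \<kappa> W = (let x0 = fst W + aff (Mw 0) (Cw 0) \<kappa>; x1 = snd W + aff (Mw 1) (Cw 1) \<kappa>;
   x2 = x0 + f1 (aff (M 1) (C 1) \<kappa> + x1); x3 = x1 + f2 (aff (M 2) (C 2) \<kappa> + x2) in (x2, x3))"
definition "outp \<kappa> m = (let x2 = fst m; x3 = snd m;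
   x4 = x2 + f3 (aff (M 3) (C 3) \<kappa> + x3); x5 = x3 + f4 (aff (M 4) (C 4) \<kappa> + x4)
   in (x4 + aff (Mw 2) (Cw 2) \<kappa>, x5 + aff (Mw 3) (Cw 3) \<kappa>))"
definition "midb \<kappa> S = (let x4 = fst S + aff (Mw 2) (Cw 2) \<kappa>; x5 = snd S + aff (Mw 3) (Cw 3) \<kappa>;
   x3 = x5 + f4 (aff (M 4) (C 4) \<kappa> + x4); x2 = x4 + f3 (aff (M 3) (C 3) \<kappa> + x3) in (x2, x3))"
definition "inp \<kappa> m = (let x2 = fst m; x3 = snd m;
   x1 = x3 + f2 (aff (M 2) (C 2) \<kappa> + x2); x0 = x2 + f1 (aff (M 1) (C 1) \<kappa> + x1)
   in (x0 + aff (Mw 0) (Cw 0) \<kappa>, x1 + aff (Mw 1) (Cw 1) \<kappa>))"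

lemma KAFw_eq: "KAFw [f1, f2, f3, f4] Mw Cw M C \<kappa> W = outp \<kappa> (midf \<kappa> W)"
  by (simp add: KAFw_def numeral_eq_Suc Psi_def xorb_def outp_def midf_def Let_def add_ac)

lemma midb_outp: "midb \<kappa> (outp \<kappa> m) = m"
  by (simp add: midb_def outp_def Let_def add_ac)
lemma outp_midb: "outp \<kappa> (midb \<kappa> S) = S"
  by (simp add: midb_def outp_def Let_def add_ac)
lemma inp_midf: "inp \<kappa> (midf \<kappa> W) = W"
  by (simp add: inp_def midf_def Let_def add_ac)
lemma midf_inp: "midf \<kappa> (inp \<kappa> m) = m"
  by (simp add: inp_def midf_def Let_def add_ac)

lemma inv_KAFw: "inv (KAFw [f1, f2, f3, f4] Mw Cw M C \<kappa>) = (\<lambda>S. inp \<kappa> (midb \<kappa> S))"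
  by (rule inv_equality) (simp_all add: KAFw_eq midb_outp outp_midb inp_midf midf_inp)

lemma R1: "midf \<kappa> (xorb W (M 2 *v d + Mw 0 *v d, M 1 *v d + Mw 1 *v d))
   = xorb (midf (\<kappa> + d) W) (M 2 *v d, M 1 *v d)"
  by (simp add: midf_def xorb_def Let_def aff_add add_ac)
lemma R3: "midb (\<kappa> + d) (xorb S (M 4 *v d + Mw 2 *v d, M 3 *v d + Mw 3 *v d))
   = xorb (midb \<kappa> S) (M 4 *v d, M 3 *v d)"
  by (simp add: midb_def xorb_def Let_def aff_add add_ac)
lemma R4: "inp (\<kappa> + d) (xorb m (M 2 *v d, M 1 *v d))
   = xorb (inp \<kappa> m) (M 2 *v d + Mw 0 *v d, M 1 *v d + Mw 1 *v d)"
  by (simp add: inp_def xorb_def Let_def aff_add add_ac)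
end

lemma UNIV_bit: "(UNIV :: bit set) = {0, 1}" by (auto intro: bit.exhaust)
instance bit :: finite
  by standard (simp only: UNIV_bit finite_insert finite.emptyI)
lemma card_bit: "CARD(bit) = 2"
  by (simp only: UNIV_bit) simp
lemma card_block: "CARD('n::finite block) = 2 ^ CARD('n) * 2 ^ CARD('n)"
  by (simp add: card_bit)

lemma xorb_cancel[simp]: "xorb (xorb m X) X = m"
  by (simp add: xorb_def add.assoc)
lemma xorb_assoc: "xorb (xorb m X) Y = xorb m (xorb X Y)"
  by (simp add: xorb_def add.assoc)
lemma xorb_comm: "xorb X Y = xorb Y X"
  by (simp add: xorb_def add.commute)
lemma xorb_zero[simp]: "xorb (0,0) X = X"
  by (simp add: xorb_def)
lemma xorb_self[simp]: "xorb X X = (0,0)"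
  by (simp add: xorb_def)
lemma xorb_inj: "xorb m X = xorb m Y \<Longrightarrow> X = Y"
  by (metis xorb_cancel xorb_comm)

definition dd :: "bit ^ 'n::finite" where "dd = (\<chi> i. 1)"
lemma dd_nz: "(k::bit^'n::finite) + dd \<noteq> k"
proof
  assume "k + dd = k"
  then have "(dd::bit^'n) = 0" by simp
  then show False by (simp add: dd_def vec_eq_iff)
qed

definition alph :: "(nat \<Rightarrow> bit ^ 'n ^ 'n) \<Rightarrow> (nat \<Rightarrow> bit ^ 'n ^ 'n) \<Rightarrow> 'n::finite block" where
  "alph Mw M = (M 4 *v dd + Mw 2 *v dd, M 3 *v dd + Mw 3 *v dd)"
definition bet :: "(nat \<Rightarrow> bit ^ 'n ^ 'n) \<Rightarrow> (nat \<Rightarrow> bit ^ 'n ^ 'n) \<Rightarrow> 'n::finite block" where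
  "bet Mw M = (M 2 *v dd + Mw 0 *v dd, M 1 *v dd + Mw 1 *v dd)"
definition caseA :: "(nat \<Rightarrow> bit ^ 'n ^ 'n) \<Rightarrow> bool" where
  "caseA M = (M 2 *v (dd::bit^'n::finite) = M 4 *v dd \<and> M 1 *v (dd::bit^'n) = M 3 *v dd)"
definition Qs :: "(nat \<Rightarrow> bit ^ 'n ^ 'n) \<Rightarrow> (nat \<Rightarrow> bit ^ 'n ^ 'n) \<Rightarrow> 'n::finite block list \<Rightarrow> 'n query" where
  "Qs Mw M as = (if length as = 0 then (True, 0, (0,0))
     else if length as = 1 then (False, dd, xorb (as!0) (alph Mw M))
     else if length as = 2 then (True, 0, xorb (as!1) (bet Mw M))
     else (False, dd, xorb (as!2) (alph Mw M)))"
definition Dc :: "(nat \<Rightarrow> bit ^ 'n ^ 'n) \<Rightarrow> (nat \<Rightarrow> bit ^ 'n ^ 'n) \<Rightarrow> 'n::finite block list \<Rightarrow> bool" where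
  "Dc Mw M as = (if caseA M then as!1 = bet Mw M else as!1 \<noteq> bet Mw M \<and> as!3 = bet Mw M)"

lemma run_eq: "run 4 (Qs Mw M, Dc Mw M) Orc =
  (let a1 = Orc (True, 0, (0,0)); a2 = Orc (False, dd, xorb a1 (alph Mw M));
       a3 = Orc (True, 0, xorb a2 (bet Mw M)); a4 = Orc (False, dd, xorb a3 (alph Mw M))
   in if caseA M then a2 = bet Mw M else a2 \<noteq> bet Mw M \<and> a4 = bet Mw M)"
  by (simp add: run_def numeral_eq_Suc Qs_def Dc_def Let_def nth_append)

lemma run_eq2:
  assumes "Orc (True, 0, (0,0)) = a1" "Orc (False, dd, xorb a1 (alph Mw M)) = a2"
    "Orc (True, 0, xorb a2 (bet Mw M)) = a3" "Orc (False, dd, xorb a3 (alph Mw M)) = a4"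
  shows "run 4 (Qs Mw M, Dc Mw M) Orc = (if caseA M then a2 = bet Mw M else a2 \<noteq> bet Mw M \<and> a4 = bet Mw M)"
  unfolding run_eq Let_def assms ..

lemma RK_fwd: "RK E k (True, 0, W) = E k W" by (simp add: RK_def)
lemma RK_bwd: "RK E k (False, d, W) = inv (E (k + d)) W" by (simp add: RK_def)

lemma real_run:
  "run 4 (Qs Mw M, Dc Mw M) (RK (KAFw [f1, f2, f3, f4] Mw Cw M C) k)"
proof -
  let ?m1 = "midf f1 f2 Mw Cw M C k (0,0)"
  let ?d = "dd :: bit ^ 'a"
  have e1: "xorb (0,0) (bet Mw M) = bet Mw M" by simp
  define a1 where "a1 = outp f3 f4 Mw Cw M C k ?m1"
  define a2 where "a2 = inp f1 f2 Mw Cw M C (k + ?d) (xorb ?m1 (M 4 *v ?d, M 3 *v ?d))"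
  define m3 where "m3 = xorb (xorb ?m1 (M 4 *v ?d, M 3 *v ?d)) (M 2 *v ?d, M 1 *v ?d)"
  define a3 where "a3 = outp f3 f4 Mw Cw M C k m3"
  have A1: "RK (KAFw [f1, f2, f3, f4] Mw Cw M C) k (True, 0, (0,0)) = a1"
    by (simp add: RK_fwd KAFw_eq a1_def)
  have A2: "RK (KAFw [f1, f2, f3, f4] Mw Cw M C) k (False, ?d, xorb a1 (alph Mw M)) = a2"
    by (simp add: RK_bwd inv_KAFw a1_def a2_def alph_def R3 midb_outp)
  have A3: "RK (KAFw [f1, f2, f3, f4] Mw Cw M C) k (True, 0, xorb a2 (bet Mw M)) = a3"
    unfolding RK_fwd KAFw_eq a3_def m3_def a2_def bet_def R1 midf_inp ..
  have A4: "RK (KAFw [f1, f2, f3, f4] Mw Cw M C) k (False, ?d, xorb a3 (alph Mw M)) = bet Mw M"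
  proof -
    have "midb f3 f4 Mw Cw M C (k + ?d) (xorb a3 (alph Mw M)) = xorb m3 (M 4 *v ?d, M 3 *v ?d)"
      unfolding a3_def alph_def R3 midb_outp ..
    also have "\<dots> = xorb ?m1 (M 2 *v ?d, M 1 *v ?d)"
      unfolding m3_def by (simp add: xorb_def add_ac)
    finally have "RK (KAFw [f1, f2, f3, f4] Mw Cw M C) k (False, ?d, xorb a3 (alph Mw M))
       = inp f1 f2 Mw Cw M C (k + ?d) (xorb ?m1 (M 2 *v ?d, M 1 *v ?d))"
      by (simp add: RK_bwd inv_KAFw)
    also have "\<dots> = bet Mw M" unfolding R4 inp_midf bet_def by simp
    finally show ?thesis .
  qed
  have A2c: "a2 = bet Mw M \<longleftrightarrow> caseA M"
  proof
    assume "caseA M"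
    then have e: "(M 4 *v ?d, M 3 *v ?d) = (M 2 *v ?d, M 1 *v ?d)" by (simp add: caseA_def)
    show "a2 = bet Mw M" unfolding a2_def e R4 inp_midf bet_def by simp
  next
    assume h: "a2 = bet Mw M"
    have "m3 = midf f1 f2 Mw Cw M C k (xorb a2 (bet Mw M))"
      unfolding m3_def a2_def bet_def R1 midf_inp ..
    then have "m3 = ?m1" using h by simp
    then have "xorb ?m1 (xorb (M 4 *v ?d, M 3 *v ?d) (M 2 *v ?d, M 1 *v ?d)) = xorb ?m1 (0,0)"
      unfolding m3_def xorb_assoc by (simp add: xorb_def)
    then have "xorb (M 4 *v ?d, M 3 *v ?d) (M 2 *v ?d, M 1 *v ?d) = (0,0)"
      by (rule xorb_inj)
    then show "caseA M" by (auto simp add: xorb_def caseA_def dest: bv_sum0)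
  qed
  have RR: "run 4 (Qs Mw M, Dc Mw M) (RK (KAFw [f1, f2, f3, f4] Mw Cw M C) k)
     = (if caseA M then a2 = bet Mw M else a2 \<noteq> bet Mw M \<and> bet Mw M = bet Mw M)"
    by (rule run_eq2[where Orc = "RK (KAFw [f1, f2, f3, f4] Mw Cw M C) k", OF A1 A2 A3 A4])
  have T: "if caseA M then a2 = bet Mw M else a2 \<noteq> bet Mw M \<and> bet Mw M = bet Mw M"
    using A2c by auto
  show ?thesis unfolding RR by (rule T)
qed

definition sw :: "'a \<Rightarrow> 'a \<Rightarrow> 'a \<Rightarrow> 'a" where
  "sw a b x = (if x = a then b else if x = b then a else x)"
lemma sw_sw[simp]: "sw a b (sw a b x) = x" by (simp add: sw_def)
lemma inj_sw: "inj (sw a b)" by (metis injI sw_sw)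
lemma bij_sw: "bij (sw a b)" by (metis bij_betw_imageI inj_sw surj_def sw_sw)
lemma sw_b[simp]: "sw a b b = a" by (simp add: sw_def)
lemma sw_other: "x \<noteq> a \<Longrightarrow> x \<noteq> b \<Longrightarrow> sw a b x = x" by (simp add: sw_def)

lemma count_le:
  assumes "finite V" "inj_on F (Sigma A Y)" "F ` Sigma A Y \<subseteq> V" "finite A"
    "\<And>x. x \<in> A \<Longrightarrow> finite (Y x)" "\<And>x. x \<in> A \<Longrightarrow> m \<le> card (Y x)"
  shows "m * card A \<le> card V"
proof -
  have "m * card A = (\<Sum>x\<in>A. m)" by simp
  also have "\<dots> \<le> (\<Sum>x\<in>A. card (Y x))" by (rule sum_mono) (rule assms(6))
  also have "\<dots> = card (Sigma A Y)" using assms(4,5) by simp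
  also have "\<dots> \<le> card V" by (rule card_inj_on_le[OF assms(2,3,1)])
  finally show ?thesis .
qed

lemma ideal_run:
  assumes "\<forall>\<kappa>. bij (E \<kappa>)"
  shows "run 4 (Qs Mw M, Dc Mw M) (RK E k) =
    (if caseA M then inv (E (k + dd)) (xorb (E k (0,0)) (alph Mw M)) = bet Mw M
     else inv (E (k + dd)) (xorb (E k (0,0)) (alph Mw M)) \<noteq> bet Mw M \<and>
       inv (E (k + dd)) (xorb (E k (xorb (inv (E (k + dd)) (xorb (E k (0,0)) (alph Mw M))) (bet Mw M))) (alph Mw M)) = bet Mw M)"
  by (rule run_eq2[where Orc = "RK E k"]) (simp_all add: RK_def)

lemma ideal_bound:
  fixes Mw M :: "nat \<Rightarrow> bit ^ 'n::finite ^ 'n"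
  defines "AllS \<equiv> (ideal_ciphers :: ('n key \<Rightarrow> 'n block \<Rightarrow> 'n block) set) \<times> (UNIV :: 'n key set)"
  shows "(CARD('n block) - 1) * card (AllS \<inter> {(E, k). run 4 (Qs Mw M, Dc Mw M) (RK E k)}) \<le> card AllS"
proof -
  let ?Ev = "AllS \<inter> {(E, k). run 4 (Qs Mw M, Dc Mw M) (RK E k)}"
  let ?b = "bet Mw M :: 'n block"
  let ?a = "alph Mw M :: 'n block"
  define Y where "Y = (\<lambda>(E :: 'n key \<Rightarrow> 'n block \<Rightarrow> 'n block, k :: 'n key).
      UNIV - {inv (E (k + dd)) (xorb (E k (0,0)) ?a)})"
  define F where "F = (\<lambda>((E :: 'n key \<Rightarrow> 'n block \<Rightarrow> 'n block, k :: 'n key), y :: 'n block).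
      (E((k + dd) := E (k + dd) \<circ> sw ?b y), k))"
  have finAll: "finite AllS" unfolding AllS_def by simp
  show ?thesis
  proof (rule count_le[where F = F and Y = Y])
    show "finite AllS" by (rule finAll)
    show "finite ?Ev" using finAll by simp
    show "finite (Y x)" for x by simp
    show "CARD('n block) - 1 \<le> card (Y x)" for x
      by (cases x) (simp add: Y_def card_Diff_singleton)
    show "F ` Sigma ?Ev Y \<subseteq> AllS"
    proof
      fix z assume "z \<in> F ` Sigma ?Ev Y"
      then obtain E k y where z: "z = F ((E, k), y)" and mem: "((E, k), y) \<in> Sigma ?Ev Y"
        by auto
      from mem have bE: "\<forall>\<kappa>. bij (E \<kappa>)" by (simp add: AllS_def ideal_ciphers_def)
      show "z \<in> AllS"
        using bE by (simp add: z F_def AllS_def ideal_ciphers_def bij_comp bij_sw)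
    qed
    show "inj_on F (Sigma ?Ev Y)"
    proof (rule inj_onI)
      fix p1 p2
      assume m1': "p1 \<in> Sigma ?Ev Y" and m2': "p2 \<in> Sigma ?Ev Y" and eq': "F p1 = F p2"
      obtain E1 k1 y1 where p1: "p1 = ((E1, k1), y1)" by (metis prod.collapse)
      obtain E2 k2 y2 where p2: "p2 = ((E2, k2), y2)" by (metis prod.collapse)
      have m1: "((E1, k1), y1) \<in> Sigma ?Ev Y" using m1' p1 by simp
      have m2: "((E2, k2), y2) \<in> Sigma ?Ev Y" using m2' p2 by simp
      have eq: "F ((E1, k1), y1) = F ((E2, k2), y2)" using eq' p1 p2 by simp
      have bE1: "\<forall>\<kappa>. bij (E1 \<kappa>)" and bE2: "\<forall>\<kappa>. bij (E2 \<kappa>)"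
        using m1 m2 by (simp_all add: AllS_def ideal_ciphers_def)
      have r1: "run 4 (Qs Mw M, Dc Mw M) (RK E1 k1)" and r2: "run 4 (Qs Mw M, Dc Mw M) (RK E2 k2)"
        using m1 m2 by auto
      have kk: "k1 = k2" using eq by (simp add: F_def)
      define k where "k = k1"
      define K where "K = k + dd"
      have Kk: "k \<noteq> K" unfolding K_def using dd_nz[of k] by metis
      have feq: "E1(K := E1 K \<circ> sw ?b y1) = E2(K := E2 K \<circ> sw ?b y2)"
        using eq by (simp add: F_def kk K_def k_def)
      have Pk: "E1 k = E2 k" using fun_cong[OF feq, of k] Kk by simp
      define Q' where "Q' = E1 K \<circ> sw ?b y1"
      have Q'2: "Q' = E2 K \<circ> sw ?b y2" using fun_cong[OF feq, of K] by (simp add: Q'_def)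
      have injQ': "inj Q'" unfolding Q'_def using bE1 by (metis bij_is_inj inj_compose inj_sw)
      define c where "c = xorb (E1 k (0,0)) ?a"
      have c2: "c = xorb (E2 k (0,0)) ?a" using Pk by (simp add: c_def)
      define v1 where "v1 = inv (E1 K) c"
      define v2 where "v2 = inv (E2 K) c"
      have Qv1: "E1 K v1 = c" unfolding v1_def using bE1 by (metis bij_inv_eq_iff)
      have Qv2: "E2 K v2 = c" unfolding v2_def using bE2 by (metis bij_inv_eq_iff)
      have y1v: "y1 \<noteq> v1" using m1 by (simp add: Y_def v1_def c_def K_def k_def)
      have y2v: "y2 \<noteq> v2" using m2 by (simp add: Y_def v2_def c2 K_def k_def kk)
      have run1: "if caseA M then v1 = ?b else v1 \<noteq> ?b \<and>
          inv (E1 K) (xorb (E1 k (xorb v1 ?b)) ?a) = ?b"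
        using r1 ideal_run[OF bE1] unfolding v1_def c_def K_def k_def by simp
      have run2: "if caseA M then v2 = ?b else v2 \<noteq> ?b \<and>
          inv (E2 K) (xorb (E2 k (xorb v2 ?b)) ?a) = ?b"
        using r2 ideal_run[OF bE2] unfolding v2_def c2 K_def k_def kk by simp
      have yy: "y1 = y2"
      proof (cases "caseA M")
        case True
        then have "v1 = ?b" "v2 = ?b" using run1 run2 by simp_all
        then have "Q' y1 = c" "Q' y2 = c" using Qv1 Qv2
          by (simp add: Q'_def sw_def, simp add: Q'2 sw_def)
        then show ?thesis using injQ' by (metis injD)
      next
        case False
        then have nb: "v1 \<noteq> ?b" "v2 \<noteq> ?b" and
          e1: "inv (E1 K) (xorb (E1 k (xorb v1 ?b)) ?a) = ?b" and
          e2: "inv (E2 K) (xorb (E2 k (xorb v2 ?b)) ?a) = ?b"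
          using run1 run2 by simp_all
        have "Q' v1 = c" unfolding Q'_def using Qv1 nb y1v by (simp add: sw_other)
        moreover have "Q' v2 = c" unfolding Q'2 using Qv2 nb y2v by (simp add: sw_other)
        ultimately have vv: "v1 = v2" using injQ' by (metis injD)
        have b1: "E1 K ?b = xorb (E1 k (xorb v1 ?b)) ?a"
          using e1 bE1 by (metis bij_inv_eq_iff)
        have b2: "E2 K ?b = xorb (E1 k (xorb v1 ?b)) ?a"
          using e2 bE2 Pk vv by (metis bij_inv_eq_iff)
        have "Q' y1 = xorb (E1 k (xorb v1 ?b)) ?a" using b1 by (simp add: Q'_def sw_def)
        moreover have "Q' y2 = xorb (E1 k (xorb v1 ?b)) ?a" using b2 by (simp add: Q'2 sw_def)
        ultimately have "Q' y1 = Q' y2" by simp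
        then show ?thesis using injQ' by (metis injD)
      qed
      have QQ: "E1 K = E2 K"
      proof
        fix x
        have "Q' (sw ?b y1 x) = E1 K x" by (simp add: Q'_def)
        moreover have "Q' (sw ?b y1 x) = E2 K x" by (simp add: Q'2 yy)
        ultimately show "E1 K x = E2 K x" by simp
      qed
      have "E1 = E2"
      proof
        fix x
        show "E1 x = E2 x"
        proof (cases "x = K")
          case True then show ?thesis using QQ by simp
        next
          case False then show ?thesis using fun_cong[OF feq, of x] by simp
        qed
      qed
      then show "p1 = p2" using kk yy p1 p2 by simp
    qed
  qed
qed

theorem theorem3:
  fixes Mw :: "nat \<Rightarrow> bit ^ 'n::finite ^ 'n" and Cw :: "nat \<Rightarrow> bit ^ 'n"
    and M :: "nat \<Rightarrow> bit ^ 'n ^ 'n" and C :: "nat \<Rightarrow> bit ^ 'n"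
  shows "\<exists>D :: 'n distinguisher. \<forall>f1 f2 f3 f4 :: 'n rf.
           adv_rka 4 D (KAFw [f1, f2, f3, f4] Mw Cw M C)
             \<ge> 1 - 1 / (real (2 ^ CARD('n)) ^ 2 - 1)"
proof (intro exI allI)
  fix f1 f2 f3 f4 :: "'n rf"
  define AllS where "AllS = (ideal_ciphers :: ('n key \<Rightarrow> 'n block \<Rightarrow> 'n block) set) \<times> (UNIV :: 'n key set)"
  define Ev where "Ev = AllS \<inter> {(E, k). run 4 (Qs Mw M, Dc Mw M) (RK E k)}"
  define Mc where "Mc = CARD('n block)"
  have Mc: "Mc = 2 ^ CARD('n) * 2 ^ CARD('n)" unfolding Mc_def by (rule card_block)
  have Mc4: "Mc \<ge> 4"
  proof -
    have "(2::nat) ^ CARD('n) \<ge> 2 ^ 1" by (rule power_increasing) simp_all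
    then have "(2::nat) ^ CARD('n) \<ge> 2" by simp
    then show ?thesis unfolding Mc using mult_le_mono[of 2 "2 ^ CARD('n)" 2 "2 ^ CARD('n)"] by simp
  qed
  have fin: "finite AllS" unfolding AllS_def by simp
  have ne: "AllS \<noteq> {}"
  proof -
    have "((\<lambda>\<kappa>. id), 0) \<in> AllS" by (simp add: AllS_def ideal_ciphers_def)
    then show ?thesis by blast
  qed
  have cpos: "card AllS > 0" using fin ne by (simp add: card_gt_0_iff)
  have bnd: "(Mc - 1) * card Ev \<le> card AllS"
    unfolding Mc_def Ev_def AllS_def by (rule ideal_bound)
  have pI: "measure_pmf.prob (pmf_of_set AllS) {(E, k). run 4 (Qs Mw M, Dc Mw M) (RK E k)}
      = card Ev / card AllS"
    unfolding Ev_def by (rule measure_pmf_of_set[OF ne fin])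
  have pI_le: "card Ev / card AllS \<le> 1 / (real Mc - 1)"
  proof -
    have "real (Mc - 1) * real (card Ev) \<le> real (card AllS)"
      using bnd by (metis of_nat_le_iff of_nat_mult)
    moreover have "real (Mc - 1) = real Mc - 1" using Mc4 by simp
    ultimately have "(real Mc - 1) * real (card Ev) \<le> real (card AllS)" by simp
    moreover have "real Mc - 1 > 0" using Mc4 by simp
    ultimately show ?thesis using cpos by (simp add: field_simps)
  qed
  have pR: "measure_pmf.prob (pmf_of_set (UNIV :: 'n key set))
      {k. run 4 (Qs Mw M, Dc Mw M) (RK (KAFw [f1, f2, f3, f4] Mw Cw M C) k)} = 1"
  proof -
    have "{k. run 4 (Qs Mw M, Dc Mw M) (RK (KAFw [f1, f2, f3, f4] Mw Cw M C) k)} = UNIV"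
      using real_run by blast
    then show ?thesis by (simp add: measure_pmf_of_set)
  qed
  have "real (2 ^ CARD('n)) ^ 2 - 1 = real Mc - 1" by (simp add: Mc power2_eq_square)
  moreover have "card Ev / card AllS \<le> 1"
  proof -
    have ce: "card Ev \<le> card AllS" by (rule card_mono[OF fin]) (simp add: Ev_def)
    then show ?thesis using cpos by (simp add: divide_le_eq_1)
  qed
  ultimately show "adv_rka 4 (Qs Mw M, Dc Mw M) (KAFw [f1, f2, f3, f4] Mw Cw M C)
             \<ge> 1 - 1 / (real (2 ^ CARD('n)) ^ 2 - 1)"
    unfolding adv_rka_def using pI pR pI_le AllS_def by simp
qed
end
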